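(* Let $\mathcal{O}=(X_{\min},X_{\max})$ be bounded, $T>0$, and let $a=\tfrac12\sigma^2$, $b$, $r$ be bounded functions on $(0,T)\times\mathcal{O}$ with $a(t,x)\ge\eta_0>0$ and $|a(t,x)-a(t,y)|\le L|x-y|$ for all $t\in(0,T)$, $x,y\in\mathcal{O}$. For $J\ge1$, $h=\frac{X_{\max}-X_{\min}}{J+1}$, $x_j=X_{\min}+jh$, and a fixed time $t$, write $a_j=a(t,x_j)$, $b_j=b(t,x_j)$, $r_j=r(t,x_j)$, and let $\tilde A$ be the $J\times J$ matrix defined by, for $x\in\mathbb{R}^J$ extended by $x_{-1}=x_0=x_{J+1}=x_{J+2}=0$, $$(\tilde Ax)_j=a_j\Big[\tfrac{-x_{j-1}+2x_j-x_{j+1}}{h^2}+\tfrac{x_{j-2}-4x_{j-1}+6x_j-4x_{j+1}+x_{j+2}}{12h^2}\Big]+b_j\Big[\tfrac{x_{j+1}-x_{j-1}}{2h}+\tfrac{x_{j-2}-2x_{j-1}+2x_{j+1}-x_{j+2}}{12h}\Big]+r_jx_j,$$ $j=1,\dots,J$ (the fourth-order finite difference approximation of $-a w_{xx}+b w_x+r w$). Then there exist $\eta_2>0$ and $\gamma_2\ge0$, independent of $J$, $h$ and $t$, such that for all $x\in\mathbb{R}^J$, $$\langle x,\tilde Ax\rangle\ge\eta_2N(x/h)^2-\gamma_2\|x\|_2^2,$$ where $N(x):=\big(\sum_{j=1}^{J+1}|x_j-x_{j-1}|^2\big)^{1/2}$ with $x_0=x_{J+1}=0$.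
   Context: $\langle\cdot,\cdot\rangle$ and $\|\cdot\|_2$ denote the Euclidean inner product and norm on $\mathbb{R}^J$. *)

theory Defs
  imports Complex_Main
begin

text \<open>Vectors in R^J are represented as functions x :: int => real, of which only the
  entries x 1, ..., x J are relevant. ext J x is the extension by zero outside 1..J
  (in particular x_{-1} = x_0 = x_{J+1} = x_{J+2} = 0).\<close>

definition ext :: "nat \<Rightarrow> (int \<Rightarrow> real) \<Rightarrow> int \<Rightarrow> real" where
  "ext J x j = (if 1 \<le> j \<and> j \<le> int J then x j else 0)"

definition mesh :: "real \<Rightarrow> real \<Rightarrow> nat \<Rightarrow> real" where
  "mesh Xmin Xmax J = (Xmax - Xmin) / (real J + 1)"

definition grid :: "real \<Rightarrow> real \<Rightarrow> nat \<Rightarrow> int \<Rightarrow> real" where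
  "grid Xmin Xmax J j = Xmin + real_of_int j * mesh Xmin Xmax J"

definition Atilde ::
  "(real \<Rightarrow> real \<Rightarrow> real) \<Rightarrow> (real \<Rightarrow> real \<Rightarrow> real) \<Rightarrow> (real \<Rightarrow> real \<Rightarrow> real) \<Rightarrow>
   real \<Rightarrow> real \<Rightarrow> nat \<Rightarrow> real \<Rightarrow> (int \<Rightarrow> real) \<Rightarrow> int \<Rightarrow> real" where
  "Atilde a b r Xmin Xmax J t x j =
    (let h = mesh Xmin Xmax J; xj = grid Xmin Xmax J j; y = ext J x in
      a t xj * ((- y (j - 1) + 2 * y j - y (j + 1)) / h\<^sup>2
                + (y (j - 2) - 4 * y (j - 1) + 6 * y j - 4 * y (j + 1) + y (j + 2)) / (12 * h\<^sup>2))
    + b t xj * ((y (j + 1) - y (j - 1)) / (2 * h)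
                + (y (j - 2) - 2 * y (j - 1) + 2 * y (j + 1) - y (j + 2)) / (12 * h))
    + r t xj * y j)"

definition innerJ :: "nat \<Rightarrow> (int \<Rightarrow> real) \<Rightarrow> (int \<Rightarrow> real) \<Rightarrow> real" where
  "innerJ J x y = (\<Sum>j = 1..int J. x j * y j)"

definition normJ_sq :: "nat \<Rightarrow> (int \<Rightarrow> real) \<Rightarrow> real" where
  "normJ_sq J x = (\<Sum>j = 1..int J. (x j)\<^sup>2)"

definition Nnorm :: "nat \<Rightarrow> (int \<Rightarrow> real) \<Rightarrow> real" where
  "Nnorm J x = sqrt (\<Sum>j = 1..int J + 1. \<bar>ext J x j - ext J x (j - 1)\<bar>\<^sup>2)"

end

theory Submission
  imports Defs
begin

lemma amgm1:
  fixes e w c :: real assumes "c > 0"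
  shows "c * e\<^sup>2 - \<bar>e\<bar> * \<bar>w\<bar> \<ge> - w\<^sup>2 / (4*c)"
proof -
  have "0 \<le> (2*c*\<bar>e\<bar> - \<bar>w\<bar>)\<^sup>2" by simp
  hence "0 \<le> 4*c*(c * e\<^sup>2 - \<bar>e\<bar> * \<bar>w\<bar>) + w\<^sup>2"
    by (simp add: power2_eq_square algebra_simps)
  thus ?thesis using assms by (simp add: field_simps)
qed

lemma cs4:
  fixes p q u v :: real
  shows "(-p/12 + 7*q/12 + 7*u/12 - v/12)\<^sup>2 \<le> 2*(p\<^sup>2+q\<^sup>2+u\<^sup>2+v\<^sup>2)"
proof -
  have g: "(A+B+C+D)\<^sup>2 \<le> 4*(A\<^sup>2+B\<^sup>2+C\<^sup>2+D\<^sup>2)" for A B C D :: real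
  proof -
    have "0 \<le> (A-B)\<^sup>2+(A-C)\<^sup>2+(A-D)\<^sup>2+(B-C)\<^sup>2+(B-D)\<^sup>2+(C-D)\<^sup>2" by simp
    thus ?thesis by (simp add: power2_eq_square algebra_simps)
  qed
  have "(-p/12 + 7*q/12 + 7*u/12 - v/12)\<^sup>2 \<le> 4*((-p/12)\<^sup>2+(7*q/12)\<^sup>2+(7*u/12)\<^sup>2+(-v/12)\<^sup>2)"
    using g[of "-p/12" "7*q/12" "7*u/12" "-v/12"] by simp
  also have "\<dots> \<le> 2*(p\<^sup>2+q\<^sup>2+u\<^sup>2+v\<^sup>2)"
    apply (simp add: power_mult_distrib power_divide)
    using zero_le_power2[of p] zero_le_power2[of q] zero_le_power2[of u] zero_le_power2[of v]
    apply linarith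
    done
  finally show ?thesis .
qed

lemma P1:
  fixes \<alpha> \<delta> ym d h L \<eta>0 :: real
  assumes "\<eta>0 > 0" "h > 0" "L \<ge> 0" "\<alpha> \<ge> \<eta>0" "\<bar>\<delta>\<bar> \<le> L*h"
  shows "(\<alpha>*d\<^sup>2 + \<delta>*ym*d)/h\<^sup>2 \<ge> \<eta>0/2*d\<^sup>2/h\<^sup>2 - L\<^sup>2/(2*\<eta>0)*ym\<^sup>2"
proof -
  have a: "\<alpha>*d\<^sup>2 \<ge> \<eta>0*d\<^sup>2" using assms by (simp add: mult_right_mono)
  have b: "\<delta>*ym*d \<ge> - (\<bar>d\<bar> * \<bar>L*h*ym\<bar>)"
  proof -
    have "\<bar>\<delta>*ym*d\<bar> = \<bar>\<delta>\<bar>*\<bar>ym\<bar>*\<bar>d\<bar>" by (simp add: abs_mult)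
    also have "\<dots> \<le> (L*h)*\<bar>ym\<bar>*\<bar>d\<bar>" using assms by (simp add: mult_right_mono)
    also have "\<dots> = \<bar>d\<bar> * \<bar>L*h*ym\<bar>" using assms by (simp add: abs_mult)
    finally show ?thesis by linarith
  qed
  have c: "\<eta>0/2 * d\<^sup>2 - \<bar>d\<bar> * \<bar>L*h*ym\<bar> \<ge> - (L*h*ym)\<^sup>2/(4*(\<eta>0/2))"
    using amgm1[where c="\<eta>0/2" and e=d and w="L*h*ym"] assms by simp
  have "\<alpha>*d\<^sup>2 + \<delta>*ym*d \<ge> \<eta>0/2*d\<^sup>2 - (L*h*ym)\<^sup>2/(2*\<eta>0)" using a b c by simp
  hence "(\<alpha>*d\<^sup>2 + \<delta>*ym*d)/h\<^sup>2 \<ge> (\<eta>0/2*d\<^sup>2 - (L*h*ym)\<^sup>2/(2*\<eta>0))/h\<^sup>2"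
    using assms by (simp add: divide_right_mono)
  also have "(\<eta>0/2*d\<^sup>2 - (L*h*ym)\<^sup>2/(2*\<eta>0))/h\<^sup>2 = \<eta>0/2*d\<^sup>2/h\<^sup>2 - L\<^sup>2/(2*\<eta>0)*ym\<^sup>2"
    using assms by (simp add: field_simps power_mult_distrib)
  finally show ?thesis .
qed

lemma P2:
  fixes \<alpha> \<alpha>m \<alpha>p ym yp e h L \<eta>0 :: real
  assumes "\<eta>0 > 0" "h > 0" "L \<ge> 0" "\<alpha> \<ge> \<eta>0" "\<bar>\<alpha> - \<alpha>m\<bar> \<le> L*h" "\<bar>\<alpha>p - \<alpha>\<bar> \<le> L*h"
  shows "(\<alpha>*e\<^sup>2 + e*((\<alpha>m-\<alpha>)*ym + (\<alpha>p-\<alpha>)*yp))/(12*h\<^sup>2) \<ge> - L\<^sup>2/(24*\<eta>0)*(ym\<^sup>2+yp\<^sup>2)"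
proof -
  define w where "w = (\<alpha>m-\<alpha>)*ym + (\<alpha>p-\<alpha>)*yp"
  have wb: "\<bar>w\<bar> \<le> L*h*(\<bar>ym\<bar>+\<bar>yp\<bar>)"
  proof -
    have "\<bar>w\<bar> \<le> \<bar>\<alpha>m-\<alpha>\<bar>*\<bar>ym\<bar> + \<bar>\<alpha>p-\<alpha>\<bar>*\<bar>yp\<bar>" unfolding w_def
      by (metis abs_mult abs_triangle_ineq)
    also have "\<dots> \<le> L*h*\<bar>ym\<bar> + L*h*\<bar>yp\<bar>" using assms
      by (intro add_mono mult_right_mono) (auto simp: abs_minus_commute)
    finally show ?thesis by (simp add: algebra_simps)
  qed
  have w2: "w\<^sup>2 \<le> 2*(L*h)\<^sup>2*(ym\<^sup>2+yp\<^sup>2)"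
  proof -
    have "w\<^sup>2 = \<bar>w\<bar>\<^sup>2" by simp
    also have "\<dots> \<le> (L*h*(\<bar>ym\<bar>+\<bar>yp\<bar>))\<^sup>2" using wb by (intro power_mono) auto
    also have "\<dots> = (L*h)\<^sup>2*(\<bar>ym\<bar>+\<bar>yp\<bar>)\<^sup>2" by (simp add: power_mult_distrib)
    also have "\<dots> \<le> (L*h)\<^sup>2*(2*(ym\<^sup>2+yp\<^sup>2))"
    proof (rule mult_left_mono)
      have "0 \<le> (\<bar>ym\<bar>-\<bar>yp\<bar>)\<^sup>2" by simp
      thus "(\<bar>ym\<bar>+\<bar>yp\<bar>)\<^sup>2 \<le> 2*(ym\<^sup>2+yp\<^sup>2)" by (simp add: power2_eq_square algebra_simps)
    qed simp
    finally show ?thesis by (simp add: algebra_simps)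
  qed
  have a: "\<alpha>*e\<^sup>2 \<ge> \<eta>0*e\<^sup>2" using assms by (simp add: mult_right_mono)
  have b: "e*w \<ge> - (\<bar>e\<bar>*\<bar>w\<bar>)" by (metis abs_ge_minus_self abs_mult minus_le_iff)
  have c: "\<eta>0*e\<^sup>2 - \<bar>e\<bar>*\<bar>w\<bar> \<ge> - w\<^sup>2/(4*\<eta>0)" using amgm1 assms by simp
  have d: "w\<^sup>2/(4*\<eta>0) \<le> 2*(L*h)\<^sup>2*(ym\<^sup>2+yp\<^sup>2)/(4*\<eta>0)"
    using divide_right_mono[OF w2, of "4*\<eta>0"] assms by simp
  have "\<alpha>*e\<^sup>2 + e*w \<ge> - (2*(L*h)\<^sup>2*(ym\<^sup>2+yp\<^sup>2)/(4*\<eta>0))" using a b c d by linarith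
  hence "(\<alpha>*e\<^sup>2 + e*w)/(12*h\<^sup>2) \<ge> (- (2*(L*h)\<^sup>2*(ym\<^sup>2+yp\<^sup>2)/(4*\<eta>0)))/(12*h\<^sup>2)"
    by (rule divide_right_mono) simp
  also have "(- (2*(L*h)\<^sup>2*(ym\<^sup>2+yp\<^sup>2)/(4*\<eta>0)))/(12*h\<^sup>2) = - L\<^sup>2/(24*\<eta>0)*(ym\<^sup>2+yp\<^sup>2)"
    using assms by (simp add: field_simps power_mult_distrib)
  finally show ?thesis unfolding w_def .
qed

lemma P3:
  fixes \<beta> y0 q B \<eta>0 :: real
  assumes "\<eta>0 > 0" "\<bar>\<beta>\<bar> \<le> B"
  shows "\<beta>*y0*q \<ge> - (\<eta>0/32*q\<^sup>2) - 8*B\<^sup>2/\<eta>0*y0\<^sup>2"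
proof -
  have B0: "B \<ge> 0" using assms(2) by linarith
  have "\<bar>\<beta>*y0*q\<bar> \<le> B*\<bar>y0\<bar>*\<bar>q\<bar>" using assms by (simp add: abs_mult mult_right_mono)
  moreover have "0 \<le> (\<eta>0*\<bar>q\<bar> - 16*B*\<bar>y0\<bar>)\<^sup>2" by simp
  hence "0 \<le> \<eta>0\<^sup>2*q\<^sup>2 - 32*\<eta>0*(B*\<bar>y0\<bar>*\<bar>q\<bar>) + 256*B\<^sup>2*y0\<^sup>2"
    by (simp add: power2_eq_square algebra_simps)
  hence "B*\<bar>y0\<bar>*\<bar>q\<bar> \<le> \<eta>0/32*q\<^sup>2 + 8*B\<^sup>2/\<eta>0*y0\<^sup>2"
    using assms by (simp add: field_simps power2_eq_square)
  ultimately show ?thesis by linarith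
qed

lemma shift_sum:
  fixes f :: "int \<Rightarrow> real"
  assumes "f lo = 0" "f (hi+1) = 0" "lo \<le> hi + 1"
  shows "(\<Sum>j=lo..hi. f (j+1)) = (\<Sum>j=lo..hi. f j)"
proof -
  have "(\<Sum>j=lo..hi. f (j+1)) = (\<Sum>j\<in>(\<lambda>j. j+1) ` {lo..hi}. f j)"
    by (subst sum.reindex) (auto simp: inj_on_def)
  also have "(\<lambda>j. j+1) ` {lo..hi} = {lo+1..hi+1}"
    by (auto simp: image_iff intro!: bexI[where x="_ - 1"])
  also have "(\<Sum>j=lo+1..hi+1. f j) = (\<Sum>j=lo..hi+1. f j) - f lo"
  proof -
    have "{lo..hi+1} = insert lo {lo+1..hi+1}" using assms(3) by auto
    then show ?thesis by simp
  qed
  also have "(\<Sum>j=lo..hi+1. f j) = (\<Sum>j=lo..hi. f j) + f (hi+1)"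
    using atLeastAtMostPlus1_int_conv[of lo hi] assms(3) by (simp add: add.commute)
  finally show ?thesis using assms by simp
qed

lemma local_bound:
  fixes \<alpha> \<alpha>m \<alpha>p \<beta> \<rho> y2m ym y0 yp y2p h L B R \<eta>0 :: real
  assumes "\<eta>0 > 0" "h > 0" "L \<ge> 0" "\<alpha> \<ge> \<eta>0" "\<bar>\<alpha> - \<alpha>m\<bar> \<le> L*h" "\<bar>\<alpha>p - \<alpha>\<bar> \<le> L*h"
    "\<bar>\<beta>\<bar> \<le> B" "\<bar>\<rho>\<bar> \<le> R"
  shows "(\<alpha>*(y0-ym)\<^sup>2 + (\<alpha>-\<alpha>m)*ym*(y0-ym))/h\<^sup>2
     + (\<alpha>*(ym-2*y0+yp)\<^sup>2 + (ym-2*y0+yp)*((\<alpha>m-\<alpha>)*ym + (\<alpha>p-\<alpha>)*yp))/(12*h\<^sup>2)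
     + \<beta>*y0*(((yp-ym)/2 + (y2m-2*ym+2*yp-y2p)/12)/h) + \<rho>*y0\<^sup>2
   \<ge> \<eta>0/2*(y0-ym)\<^sup>2/h\<^sup>2 - \<eta>0/16*((ym-y2m)\<^sup>2+(y0-ym)\<^sup>2+(yp-y0)\<^sup>2+(y2p-yp)\<^sup>2)/h\<^sup>2
     - (L\<^sup>2/\<eta>0 + 8*B\<^sup>2/\<eta>0 + R)*(ym\<^sup>2+y0\<^sup>2+yp\<^sup>2)"
proof -
  have p1: "(\<alpha>*(y0-ym)\<^sup>2 + (\<alpha>-\<alpha>m)*ym*(y0-ym))/h\<^sup>2 \<ge> \<eta>0/2*(y0-ym)\<^sup>2/h\<^sup>2 - L\<^sup>2/(2*\<eta>0)*ym\<^sup>2"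
    using P1[where \<alpha>=\<alpha> and \<delta>="\<alpha>-\<alpha>m" and ym=ym and d="y0-ym"] assms by simp
  have p2: "(\<alpha>*(ym-2*y0+yp)\<^sup>2 + (ym-2*y0+yp)*((\<alpha>m-\<alpha>)*ym + (\<alpha>p-\<alpha>)*yp))/(12*h\<^sup>2) \<ge> - L\<^sup>2/(24*\<eta>0)*(ym\<^sup>2+yp\<^sup>2)"
    using P2 assms by blast
  define q where "q = ((yp-ym)/2 + (y2m-2*ym+2*yp-y2p)/12)/h"
  have p3: "\<beta>*y0*q \<ge> - (\<eta>0/32*q\<^sup>2) - 8*B\<^sup>2/\<eta>0*y0\<^sup>2" using P3 assms by blast
  have qq: "q\<^sup>2 \<le> 2*((ym-y2m)\<^sup>2+(y0-ym)\<^sup>2+(yp-y0)\<^sup>2+(y2p-yp)\<^sup>2)/h\<^sup>2"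
  proof -
    have "(yp-ym)/2 + (y2m-2*ym+2*yp-y2p)/12 = -(ym-y2m)/12 + 7*(y0-ym)/12 + 7*(yp-y0)/12 - (y2p-yp)/12"
      by (simp add: field_simps)
    hence "q\<^sup>2 = (-(ym-y2m)/12 + 7*(y0-ym)/12 + 7*(yp-y0)/12 - (y2p-yp)/12)\<^sup>2/h\<^sup>2"
      unfolding q_def by (simp add: power_divide)
    also have "\<dots> \<le> 2*((ym-y2m)\<^sup>2+(y0-ym)\<^sup>2+(yp-y0)\<^sup>2+(y2p-yp)\<^sup>2)/h\<^sup>2"
      by (rule divide_right_mono) (use cs4[of "ym-y2m" "y0-ym" "yp-y0" "y2p-yp"] in simp_all)
    finally show ?thesis .
  qed
  have p3': "\<beta>*y0*q \<ge> - (\<eta>0/16*((ym-y2m)\<^sup>2+(y0-ym)\<^sup>2+(yp-y0)\<^sup>2+(y2p-yp)\<^sup>2)/h\<^sup>2) - 8*B\<^sup>2/\<eta>0*y0\<^sup>2"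
  proof -
    have "\<eta>0/32*q\<^sup>2 \<le> \<eta>0/32*(2*((ym-y2m)\<^sup>2+(y0-ym)\<^sup>2+(yp-y0)\<^sup>2+(y2p-yp)\<^sup>2)/h\<^sup>2)"
      using qq assms by (intro mult_left_mono) auto
    moreover have "\<eta>0/32*(2*((ym-y2m)\<^sup>2+(y0-ym)\<^sup>2+(yp-y0)\<^sup>2+(y2p-yp)\<^sup>2)/h\<^sup>2) = \<eta>0/16*((ym-y2m)\<^sup>2+(y0-ym)\<^sup>2+(yp-y0)\<^sup>2+(y2p-yp)\<^sup>2)/h\<^sup>2"
      using assms by (simp add: field_simps)
    ultimately show ?thesis using p3 by linarith
  qed
  have p4: "\<rho>*y0\<^sup>2 \<ge> - R*y0\<^sup>2"
  proof -
    have "-\<rho> \<le> R" using assms by linarith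
    hence "-\<rho>*y0\<^sup>2 \<le> R*y0\<^sup>2" by (intro mult_right_mono) auto
    thus ?thesis by simp
  qed
  have c1: "L\<^sup>2/(2*\<eta>0)*ym\<^sup>2 + L\<^sup>2/(24*\<eta>0)*(ym\<^sup>2+yp\<^sup>2) \<le> L\<^sup>2/\<eta>0*(ym\<^sup>2+yp\<^sup>2)"
  proof -
    have "0 \<le> L\<^sup>2/\<eta>0*ym\<^sup>2" "0 \<le> L\<^sup>2/\<eta>0*yp\<^sup>2" using assms by simp_all
    moreover have "L\<^sup>2/(2*\<eta>0)*ym\<^sup>2 = (L\<^sup>2/\<eta>0*ym\<^sup>2)/2" by simp
    moreover have "L\<^sup>2/(24*\<eta>0)*(ym\<^sup>2+yp\<^sup>2) = (L\<^sup>2/\<eta>0*ym\<^sup>2 + L\<^sup>2/\<eta>0*yp\<^sup>2)/24"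
      using assms by (simp add: field_simps)
    moreover have "L\<^sup>2/\<eta>0*(ym\<^sup>2+yp\<^sup>2) = L\<^sup>2/\<eta>0*ym\<^sup>2 + L\<^sup>2/\<eta>0*yp\<^sup>2" by (simp add: algebra_simps)
    ultimately show ?thesis by linarith
  qed
  have c2: "(L\<^sup>2/\<eta>0 + 8*B\<^sup>2/\<eta>0 + R)*(ym\<^sup>2+y0\<^sup>2+yp\<^sup>2) \<ge> L\<^sup>2/\<eta>0*(ym\<^sup>2+yp\<^sup>2) + 8*B\<^sup>2/\<eta>0*y0\<^sup>2 + R*y0\<^sup>2"
  proof -
    have R0: "R \<ge> 0" using assms by linarith
    have "0 \<le> L\<^sup>2/\<eta>0*y0\<^sup>2" "0 \<le> 8*B\<^sup>2/\<eta>0*ym\<^sup>2" "0 \<le> 8*B\<^sup>2/\<eta>0*yp\<^sup>2" "0 \<le> R*ym\<^sup>2" "0 \<le> R*yp\<^sup>2"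
      using assms R0 by simp_all
    thus ?thesis by (simp add: algebra_simps add_divide_distrib)
  qed
  show ?thesis using p1 p2 p3' p4 c1 c2 unfolding q_def by linarith
qed

theorem lemma5p3:
  fixes a b r :: "real \<Rightarrow> real \<Rightarrow> real"
    and Xmin Xmax T \<eta>0 L :: real
  assumes "Xmin < Xmax" and "T > 0"
    and "\<exists>M. \<forall>t\<in>{0<..<T}. \<forall>x\<in>{Xmin<..<Xmax}. \<bar>a t x\<bar> \<le> M"
    and "\<exists>M. \<forall>t\<in>{0<..<T}. \<forall>x\<in>{Xmin<..<Xmax}. \<bar>b t x\<bar> \<le> M"
    and "\<exists>M. \<forall>t\<in>{0<..<T}. \<forall>x\<in>{Xmin<..<Xmax}. \<bar>r t x\<bar> \<le> M"
    and "\<eta>0 > 0"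
    and "\<forall>t\<in>{0<..<T}. \<forall>x\<in>{Xmin<..<Xmax}. a t x \<ge> \<eta>0"
    and "\<forall>t\<in>{0<..<T}. \<forall>x\<in>{Xmin<..<Xmax}. \<forall>y\<in>{Xmin<..<Xmax}.
           \<bar>a t x - a t y\<bar> \<le> L * \<bar>x - y\<bar>"
  shows "\<exists>\<eta>2 \<gamma>2. \<eta>2 > 0 \<and> \<gamma>2 \<ge> 0 \<and>
     (\<forall>J::nat. J \<ge> 1 \<longrightarrow> (\<forall>t\<in>{0<..<T}. \<forall>x :: int \<Rightarrow> real.
        innerJ J x (Atilde a b r Xmin Xmax J t x)
          \<ge> \<eta>2 * (Nnorm J (\<lambda>j. x j / mesh Xmin Xmax J))\<^sup>2 - \<gamma>2 * normJ_sq J x))"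
proof -
  from assms(4) obtain Mb where Mb: "\<forall>t\<in>{0<..<T}. \<forall>x\<in>{Xmin<..<Xmax}. \<bar>b t x\<bar> \<le> Mb" by blast
  from assms(5) obtain Mr where Mr: "\<forall>t\<in>{0<..<T}. \<forall>x\<in>{Xmin<..<Xmax}. \<bar>r t x\<bar> \<le> Mr" by blast
  define B where "B = \<bar>Mb\<bar>"
  define R where "R = \<bar>Mr\<bar>"
  have L0: "L \<ge> 0"
  proof -
    define x1 where "x1 = Xmin + (Xmax-Xmin)/3"
    define x2 where "x2 = Xmin + 2*(Xmax-Xmin)/3"
    have "x1 \<in> {Xmin<..<Xmax}" "x2 \<in> {Xmin<..<Xmax}" "T/2 \<in> {0<..<T}"
      using assms(1,2) by (auto simp: x1_def x2_def field_simps)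
    hence le: "\<bar>a (T/2) x1 - a (T/2) x2\<bar> \<le> L*\<bar>x1 - x2\<bar>" using assms(8) by blast
    have pos: "\<bar>x1 - x2\<bar> > 0" using assms(1) by (simp add: x1_def x2_def)
    show ?thesis
    proof (rule ccontr)
      assume "\<not> L \<ge> 0"
      hence "L*\<bar>x1 - x2\<bar> < 0" using pos by (simp add: mult_neg_pos)
      thus False using le by (smt (verit) abs_ge_zero)
    qed
  qed
  define C where "C = L\<^sup>2/\<eta>0 + 8*B\<^sup>2/\<eta>0 + R"
  have C0: "C \<ge> 0" using assms(6) by (simp add: C_def R_def)
  show ?thesis
  proof (rule exI[of _ "\<eta>0/4"], rule exI[of _ "3*C"], intro conjI allI impI ballI)
    show "\<eta>0/4 > 0" using assms(6) by simp
    show "3*C \<ge> 0" using C0 by simp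
    fix J :: nat and t and x :: "int \<Rightarrow> real"
    assume J1: "J \<ge> 1" and tT: "t \<in> {0<..<T}"
    define h where "h = mesh Xmin Xmax J"
    have h0: "h > 0" using assms(1) by (simp add: h_def mesh_def)
    have hJ: "(real J + 1) * h = Xmax - Xmin" by (simp add: h_def mesh_def)
    define y where "y = ext J x"
    have yz: "y j = 0" if "j < 1 \<or> j > int J" for j using that by (auto simp: y_def ext_def)
    have yx: "y j = x j" if "1 \<le> j" "j \<le> int J" for j using that by (auto simp: y_def ext_def)
    have grid_in: "grid Xmin Xmax J j \<in> {Xmin<..<Xmax}" if "1 \<le> j" "j \<le> int J" for j
    proof -
      have "real_of_int j * h > 0" using that h0 by simp
      moreover have "real_of_int j * h < (real J + 1) * h"
        using that h0 by (intro mult_strict_right_mono) auto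
      ultimately show ?thesis using hJ by (simp add: grid_def h_def[symmetric])
    qed
    define cl where "cl j = max 1 (min (int J) j)" for j
    have cl_in: "1 \<le> cl j" "cl j \<le> int J" for j using J1 by (auto simp: cl_def)
    have cl_id: "cl j = j" if "1 \<le> j" "j \<le> int J" for j using that by (auto simp: cl_def)
    have cl_step: "\<bar>cl j - cl (j-1)\<bar> \<le> 1" for j by (auto simp: cl_def)
    define \<alpha> where "\<alpha> j = a t (grid Xmin Xmax J (cl j))" for j
    define \<beta> where "\<beta> j = (if 1 \<le> j \<and> j \<le> int J then b t (grid Xmin Xmax J j) else 0)" for j
    define \<rho> where "\<rho> j = (if 1 \<le> j \<and> j \<le> int J then r t (grid Xmin Xmax J j) else 0)" for j
    have \<alpha>ge: "\<alpha> j \<ge> \<eta>0" for j using assms(7) tT grid_in[OF cl_in] by (simp add: \<alpha>_def)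
    have \<alpha>lip: "\<bar>\<alpha> j - \<alpha> (j-1)\<bar> \<le> L*h" for j
    proof -
      have "\<bar>\<alpha> j - \<alpha> (j-1)\<bar> \<le> L * \<bar>grid Xmin Xmax J (cl j) - grid Xmin Xmax J (cl (j-1))\<bar>"
        using assms(8) tT grid_in[OF cl_in] unfolding \<alpha>_def by blast
      also have "grid Xmin Xmax J (cl j) - grid Xmin Xmax J (cl (j-1)) = real_of_int (cl j - cl (j-1)) * h"
        by (simp add: grid_def h_def algebra_simps)
      also have "L * \<bar>real_of_int (cl j - cl (j-1)) * h\<bar> = L * (\<bar>real_of_int (cl j - cl (j-1))\<bar> * h)"
        using h0 by (simp add: abs_mult)
      also have "\<dots> \<le> L * (1 * h)"
      proof -
        have "\<bar>real_of_int (cl j - cl (j-1))\<bar> \<le> 1" using cl_step[of j]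
          by (metis of_int_abs of_int_le_1_iff)
        thus ?thesis using h0 L0 by (intro mult_left_mono mult_right_mono) auto
      qed
      finally show ?thesis by simp
    qed
    have \<alpha>lip': "\<bar>\<alpha> (j+1) - \<alpha> j\<bar> \<le> L*h" for j using \<alpha>lip[of "j+1"] by simp
    have \<beta>b: "\<bar>\<beta> j\<bar> \<le> B" for j
    proof (cases "1 \<le> j \<and> j \<le> int J")
      case True
      then have "\<bar>b t (grid Xmin Xmax J j)\<bar> \<le> Mb" using Mb tT grid_in by blast
      then show ?thesis using True by (simp add: \<beta>_def B_def)
    next
      case False
      then have "\<beta> j = 0" unfolding \<beta>_def by auto
      then show ?thesis by (simp add: B_def)
    qed
    have \<rho>b: "\<bar>\<rho> j\<bar> \<le> R" for j
    proof (cases "1 \<le> j \<and> j \<le> int J")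
      case True
      then have "\<bar>r t (grid Xmin Xmax J j)\<bar> \<le> Mr" using Mr tT grid_in by blast
      then show ?thesis using True by (simp add: \<rho>_def R_def)
    next
      case False
      then have "\<rho> j = 0" unfolding \<rho>_def by auto
      then show ?thesis by (simp add: R_def)
    qed
    show "\<eta>0/4 * (Nnorm J (\<lambda>j. x j / mesh Xmin Xmax J))\<^sup>2 - 3*C * normJ_sq J x
          \<le> innerJ J x (Atilde a b r Xmin Xmax J t x)"
    proof -
    define d where "d j = y j - y (j-1)" for j
    define e where "e j = y (j-1) - 2*y j + y (j+1)" for j
    define Dy where "Dy j = (y (j+1) - y (j-1))/2 + (y (j-2) - 2*y (j-1) + 2*y (j+1) - y (j+2))/12" for j
    define lo :: int where "lo = -3"
    define hi :: int where "hi = int J + 4"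
    have lohi: "lo \<le> hi + 1" by (simp add: lo_def hi_def)
    have dz: "d j = 0" if "j < 1 \<or> j > int J + 1" for j
      using that yz[of j] yz[of "j-1"] by (auto simp: d_def)
    define A where "A j = Atilde a b r Xmin Xmax J t x j" for j
    have s1: "innerJ J x (Atilde a b r Xmin Xmax J t x) = (\<Sum>j=lo..hi. y j * A j)"
      unfolding innerJ_def A_def
    proof (rule sum.mono_neutral_cong_left)
      show "finite {lo..hi}" by simp
      show "{1..int J} \<subseteq> {lo..hi}" by (auto simp: lo_def hi_def)
      show "\<forall>i\<in>{lo..hi} - {1..int J}. y i * Atilde a b r Xmin Xmax J t x i = 0"
        using yz by auto
      show "\<And>i. i \<in> {1..int J} \<Longrightarrow> x i * Atilde a b r Xmin Xmax J t x i = y i * Atilde a b r Xmin Xmax J t x i"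
        using yx by auto
    qed
    have s2: "y j * A j = (\<alpha> j * y j * (d j - d (j+1)))/h\<^sup>2
        + (\<alpha> j * y j * (e (j-1) - 2*e j + e (j+1)))/(12*h\<^sup>2)
        + \<beta> j * y j * (Dy j / h) + \<rho> j * (y j)\<^sup>2" for j
    proof (cases "1 \<le> j \<and> j \<le> int J")
      case False
      then have "y j = 0" using yz by auto
      then show ?thesis by simp
    next
      case True
      have aj: "\<alpha> j = a t (grid Xmin Xmax J j)" using True cl_id by (simp add: \<alpha>_def)
      have bj: "\<beta> j = b t (grid Xmin Xmax J j)" using True by (simp add: \<beta>_def)
      have rj: "\<rho> j = r t (grid Xmin Xmax J j)" using True by (simp add: \<rho>_def)
      have dd: "d j - d (j+1) = - y (j - 1) + 2 * y j - y (j + 1)" by (simp add: d_def)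
      have m2: "j - 1 - 1 = j - 2" "j + 1 + 1 = j + 2" by simp_all
      have ee: "e (j-1) - 2*e j + e (j+1) = y (j - 2) - 4 * y (j - 1) + 6 * y j - 4 * y (j + 1) + y (j + 2)"
        unfolding e_def m2 by (simp add: algebra_simps)
      have DD: "Dy j / h = (y (j + 1) - y (j - 1)) / (2 * h)
                + (y (j - 2) - 2 * y (j - 1) + 2 * y (j + 1) - y (j + 2)) / (12 * h)"
        using h0 by (simp add: Dy_def field_simps)
      show ?thesis unfolding A_def Atilde_def Let_def h_def[symmetric] y_def[symmetric] dd ee DD aj bj rj
        using h0 by (simp add: field_simps power2_eq_square)
    qed
    have S1: "(\<Sum>j=lo..hi. \<alpha> j * y j * (d j - d (j+1)))
        = (\<Sum>j=lo..hi. \<alpha> j * (d j)\<^sup>2 + (\<alpha> j - \<alpha> (j-1)) * y (j-1) * d j)"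
    proof -
      have sh: "(\<Sum>j=lo..hi. \<alpha> j * y j * d (j+1)) = (\<Sum>j=lo..hi. \<alpha> (j-1) * y (j-1) * d j)"
        using shift_sum[of "\<lambda>j. \<alpha> (j-1) * y (j-1) * d j" lo hi] lohi yz by (simp add: lo_def hi_def)
      have "(\<Sum>j=lo..hi. \<alpha> j * y j * (d j - d (j+1)))
          = (\<Sum>j=lo..hi. \<alpha> j * y j * d j) - (\<Sum>j=lo..hi. \<alpha> j * y j * d (j+1))"
        by (simp add: sum_subtractf[symmetric] algebra_simps)
      also have "\<dots> = (\<Sum>j=lo..hi. \<alpha> j * y j * d j) - (\<Sum>j=lo..hi. \<alpha> (j-1) * y (j-1) * d j)"
        using sh by simp
      also have "\<dots> = (\<Sum>j=lo..hi. \<alpha> j * y j * d j - \<alpha> (j-1) * y (j-1) * d j)"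
        by (simp add: sum_subtractf)
      also have "\<dots> = (\<Sum>j=lo..hi. \<alpha> j * (d j)\<^sup>2 + (\<alpha> j - \<alpha> (j-1)) * y (j-1) * d j)"
        by (rule sum.cong) (auto simp: d_def power2_eq_square algebra_simps)
      finally show ?thesis .
    qed
    define u where "u j = \<alpha> j * y j" for j
    have uz: "u j = 0" if "j < 1 \<or> j > int J" for j using yz[OF that] by (simp add: u_def)
    have S2: "(\<Sum>j=lo..hi. \<alpha> j * y j * (e (j-1) - 2*e j + e (j+1)))
        = (\<Sum>j=lo..hi. \<alpha> j * (e j)\<^sup>2 + e j * ((\<alpha> (j-1) - \<alpha> j) * y (j-1) + (\<alpha> (j+1) - \<alpha> j) * y (j+1)))"
    proof -
      have sh1: "(\<Sum>j=lo..hi. u (j+1) * e j) = (\<Sum>j=lo..hi. u j * e (j-1))"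
        using shift_sum[of "\<lambda>j. u j * e (j-1)" lo hi] lohi uz by (simp add: lo_def hi_def)
      have sh2: "(\<Sum>j=lo..hi. u j * e (j+1)) = (\<Sum>j=lo..hi. u (j-1) * e j)"
        using shift_sum[of "\<lambda>j. u (j-1) * e j" lo hi] lohi uz by (simp add: lo_def hi_def)
      have "(\<Sum>j=lo..hi. \<alpha> j * y j * (e (j-1) - 2*e j + e (j+1)))
          = (\<Sum>j=lo..hi. u j * e (j-1)) - 2 * (\<Sum>j=lo..hi. u j * e j) + (\<Sum>j=lo..hi. u j * e (j+1))"
        by (simp add: u_def sum.distrib sum_subtractf sum_distrib_left algebra_simps)
      also have "\<dots> = (\<Sum>j=lo..hi. u (j+1) * e j) - 2 * (\<Sum>j=lo..hi. u j * e j) + (\<Sum>j=lo..hi. u (j-1) * e j)"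
        using sh1 sh2 by simp
      also have "\<dots> = (\<Sum>j=lo..hi. e j * (u (j-1) - 2 * u j + u (j+1)))"
        by (simp add: sum.distrib sum_subtractf sum_distrib_left algebra_simps)
      also have "\<dots> = (\<Sum>j=lo..hi. \<alpha> j * (e j)\<^sup>2 + e j * ((\<alpha> (j-1) - \<alpha> j) * y (j-1) + (\<alpha> (j+1) - \<alpha> j) * y (j+1)))"
        by (rule sum.cong) (auto simp: u_def e_def power2_eq_square algebra_simps)
      finally show ?thesis .
    qed
    define G where "G j = (\<alpha> j * (d j)\<^sup>2 + (\<alpha> j - \<alpha> (j-1)) * y (j-1) * d j)/h\<^sup>2
        + (\<alpha> j * (e j)\<^sup>2 + e j * ((\<alpha> (j-1) - \<alpha> j) * y (j-1) + (\<alpha> (j+1) - \<alpha> j) * y (j+1)))/(12*h\<^sup>2)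
        + \<beta> j * y j * (Dy j / h) + \<rho> j * (y j)\<^sup>2" for j
    have tot: "innerJ J x (Atilde a b r Xmin Xmax J t x) = (\<Sum>j=lo..hi. G j)"
    proof -
      have "innerJ J x (Atilde a b r Xmin Xmax J t x) = (\<Sum>j=lo..hi. (\<alpha> j * y j * (d j - d (j+1)))/h\<^sup>2
        + (\<alpha> j * y j * (e (j-1) - 2*e j + e (j+1)))/(12*h\<^sup>2)
        + (\<beta> j * y j * (Dy j / h) + \<rho> j * (y j)\<^sup>2))"
        unfolding s1 s2 by (simp add: add.assoc)
      also have "\<dots> = (\<Sum>j=lo..hi. \<alpha> j * y j * (d j - d (j+1)))/h\<^sup>2
        + (\<Sum>j=lo..hi. \<alpha> j * y j * (e (j-1) - 2*e j + e (j+1)))/(12*h\<^sup>2)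
        + (\<Sum>j=lo..hi. \<beta> j * y j * (Dy j / h) + \<rho> j * (y j)\<^sup>2)"
        by (simp add: sum.distrib sum_divide_distrib)
      also have "\<dots> = (\<Sum>j=lo..hi. \<alpha> j * (d j)\<^sup>2 + (\<alpha> j - \<alpha> (j-1)) * y (j-1) * d j)/h\<^sup>2
        + (\<Sum>j=lo..hi. \<alpha> j * (e j)\<^sup>2 + e j * ((\<alpha> (j-1) - \<alpha> j) * y (j-1) + (\<alpha> (j+1) - \<alpha> j) * y (j+1)))/(12*h\<^sup>2)
        + (\<Sum>j=lo..hi. \<beta> j * y j * (Dy j / h) + \<rho> j * (y j)\<^sup>2)"
        unfolding S1 S2 ..
      also have "\<dots> = (\<Sum>j=lo..hi. G j)"
        unfolding G_def by (simp add: sum.distrib sum_divide_distrib[symmetric] add.assoc)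
      finally show ?thesis .
    qed
    define bd where "bd j = \<eta>0/2*(d j)\<^sup>2/h\<^sup>2 - \<eta>0/16*((d (j-1))\<^sup>2 + (d j)\<^sup>2 + (d (j+1))\<^sup>2 + (d (j+2))\<^sup>2)/h\<^sup>2
        - C*((y (j-1))\<^sup>2 + (y j)\<^sup>2 + (y (j+1))\<^sup>2)" for j
    have lb: "bd j \<le> G j" for j
    proof -
      have m2: "j - 1 - 1 = j - 2" "j + 2 - 1 = j + 1" by simp_all
      have m1: "d (j-1) = y (j-1) - y (j-2)" unfolding d_def m2 ..
      have p1: "d (j+1) = y (j+1) - y j" by (simp add: d_def)
      have p2: "d (j+2) = y (j+2) - y (j+1)" unfolding d_def m2 ..
      have lb0: "\<eta>0/2*(y j - y (j-1))\<^sup>2/h\<^sup>2 - \<eta>0/16*((y (j-1) - y (j-2))\<^sup>2 + (y j - y (j-1))\<^sup>2 + (y (j+1) - y j)\<^sup>2 + (y (j+2) - y (j+1))\<^sup>2)/h\<^sup>2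
          - (L\<^sup>2/\<eta>0 + 8*B\<^sup>2/\<eta>0 + R)*((y (j-1))\<^sup>2 + (y j)\<^sup>2 + (y (j+1))\<^sup>2)
        \<le> (\<alpha> j * (y j - y (j-1))\<^sup>2 + (\<alpha> j - \<alpha> (j-1)) * y (j-1) * (y j - y (j-1)))/h\<^sup>2
          + (\<alpha> j * (y (j-1) - 2*y j + y (j+1))\<^sup>2 + (y (j-1) - 2*y j + y (j+1)) * ((\<alpha> (j-1) - \<alpha> j) * y (j-1) + (\<alpha> (j+1) - \<alpha> j) * y (j+1)))/(12*h\<^sup>2)
          + \<beta> j * y j * (((y (j+1) - y (j-1))/2 + (y (j-2) - 2*y (j-1) + 2*y (j+1) - y (j+2))/12)/h) + \<rho> j * (y j)\<^sup>2"
        by (rule local_bound[OF assms(6) h0 L0 \<alpha>ge[of j] \<alpha>lip[of j] \<alpha>lip'[of j] \<beta>b[of j] \<rho>b[of j]])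
      show ?thesis unfolding bd_def G_def m1 p1 p2 unfolding d_def e_def Dy_def C_def
        by (rule lb0)
    qed
    have shd1: "(\<Sum>j=lo..hi. (d (j-1))\<^sup>2) = (\<Sum>j=lo..hi. (d j)\<^sup>2)"
      using shift_sum[of "\<lambda>j. (d (j-1))\<^sup>2" lo hi] lohi dz by (simp add: lo_def hi_def)
    have shd2: "(\<Sum>j=lo..hi. (d (j+1))\<^sup>2) = (\<Sum>j=lo..hi. (d j)\<^sup>2)"
      using shift_sum[of "\<lambda>j. (d j)\<^sup>2" lo hi] lohi dz by (simp add: lo_def hi_def)
    have shd3: "(\<Sum>j=lo..hi. (d (j+2))\<^sup>2) = (\<Sum>j=lo..hi. (d j)\<^sup>2)"
    proof -
      have "(\<Sum>j=lo..hi. (d (j+2))\<^sup>2) = (\<Sum>j=lo..hi. (d (j+1))\<^sup>2)"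
        using shift_sum[of "\<lambda>j. (d (j+1))\<^sup>2" lo hi] lohi dz by (simp add: lo_def hi_def add.assoc)
      then show ?thesis using shd2 by simp
    qed
    have shy1: "(\<Sum>j=lo..hi. (y (j-1))\<^sup>2) = (\<Sum>j=lo..hi. (y j)\<^sup>2)"
      using shift_sum[of "\<lambda>j. (y (j-1))\<^sup>2" lo hi] lohi yz by (simp add: lo_def hi_def)
    have shy2: "(\<Sum>j=lo..hi. (y (j+1))\<^sup>2) = (\<Sum>j=lo..hi. (y j)\<^sup>2)"
      using shift_sum[of "\<lambda>j. (y j)\<^sup>2" lo hi] lohi yz by (simp add: lo_def hi_def)
    define Dsum where "Dsum = (\<Sum>j=lo..hi. (d j)\<^sup>2)"
    define Ysum where "Ysum = (\<Sum>j=lo..hi. (y j)\<^sup>2)"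
    have bdsum: "(\<Sum>j=lo..hi. bd j) = \<eta>0/4 * Dsum / h\<^sup>2 - 3*C*Ysum"
    proof -
      have "(\<Sum>j=lo..hi. bd j) = \<eta>0/2/h\<^sup>2 * (\<Sum>j=lo..hi. (d j)\<^sup>2)
          - \<eta>0/16/h\<^sup>2 * ((\<Sum>j=lo..hi. (d (j-1))\<^sup>2) + (\<Sum>j=lo..hi. (d j)\<^sup>2) + (\<Sum>j=lo..hi. (d (j+1))\<^sup>2) + (\<Sum>j=lo..hi. (d (j+2))\<^sup>2))
          - C * ((\<Sum>j=lo..hi. (y (j-1))\<^sup>2) + (\<Sum>j=lo..hi. (y j)\<^sup>2) + (\<Sum>j=lo..hi. (y (j+1))\<^sup>2))"
      proof -
        define c1 where "c1 = \<eta>0/2/h\<^sup>2 - \<eta>0/16/h\<^sup>2"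
        define c2 where "c2 = \<eta>0/16/h\<^sup>2"
        have pt: "bd j = c1 * (d j)\<^sup>2 - c2 * (d (j-1))\<^sup>2 - c2 * (d (j+1))\<^sup>2 - c2 * (d (j+2))\<^sup>2
            - C * (y (j-1))\<^sup>2 - C * (y j)\<^sup>2 - C * (y (j+1))\<^sup>2" for j
          unfolding bd_def c1_def c2_def by (simp add: algebra_simps add_divide_distrib diff_divide_distrib)
        have "(\<Sum>j=lo..hi. bd j) = c1 * (\<Sum>j=lo..hi. (d j)\<^sup>2) - c2 * (\<Sum>j=lo..hi. (d (j-1))\<^sup>2)
           - c2 * (\<Sum>j=lo..hi. (d (j+1))\<^sup>2) - c2 * (\<Sum>j=lo..hi. (d (j+2))\<^sup>2)
           - C * (\<Sum>j=lo..hi. (y (j-1))\<^sup>2) - C * (\<Sum>j=lo..hi. (y j)\<^sup>2) - C * (\<Sum>j=lo..hi. (y (j+1))\<^sup>2)"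
          unfolding pt by (simp add: sum_subtractf sum_distrib_left)
        then show ?thesis unfolding c1_def c2_def by (simp add: algebra_simps)
      qed
      also have "\<dots> = \<eta>0/4 * Dsum / h\<^sup>2 - 3*C*Ysum"
        unfolding shd1 shd2 shd3 shy1 shy2 Dsum_def[symmetric] Ysum_def[symmetric]
        by (simp add: field_simps)
      finally show ?thesis .
    qed
    have Nn: "(Nnorm J (\<lambda>j. x j / mesh Xmin Xmax J))\<^sup>2 = Dsum / h\<^sup>2"
    proof -
      have ext_h: "ext J (\<lambda>j. x j / mesh Xmin Xmax J) i = y i / h" for i
        by (simp add: ext_def y_def h_def)
      have "(\<Sum>i=1..int J + 1. \<bar>ext J (\<lambda>j. x j / mesh Xmin Xmax J) i - ext J (\<lambda>j. x j / mesh Xmin Xmax J) (i - 1)\<bar>\<^sup>2)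
          = (\<Sum>i=1..int J + 1. (d i)\<^sup>2 / h\<^sup>2)"
        by (rule sum.cong) (simp_all add: ext_h d_def power_divide diff_divide_distrib[symmetric])
      also have "\<dots> = (\<Sum>i=lo..hi. (d i)\<^sup>2 / h\<^sup>2)"
        by (rule sum.mono_neutral_left) (use dz in \<open>auto simp: lo_def hi_def\<close>)
      also have "\<dots> = Dsum / h\<^sup>2" by (simp add: Dsum_def sum_divide_distrib)
      finally have eq: "(\<Sum>i=1..int J + 1. \<bar>ext J (\<lambda>j. x j / mesh Xmin Xmax J) i - ext J (\<lambda>j. x j / mesh Xmin Xmax J) (i - 1)\<bar>\<^sup>2) = Dsum / h\<^sup>2" .
      show ?thesis unfolding Nnorm_def eq
        by (simp add: Dsum_def sum_nonneg)
    qed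
    have Ns: "normJ_sq J x = Ysum"
      unfolding normJ_sq_def Ysum_def
    proof (rule sum.mono_neutral_cong_left)
      show "finite {lo..hi}" by simp
      show "{1..int J} \<subseteq> {lo..hi}" by (auto simp: lo_def hi_def)
      show "\<forall>i\<in>{lo..hi} - {1..int J}. (y i)\<^sup>2 = 0" using yz by auto
      show "\<And>i. i \<in> {1..int J} \<Longrightarrow> (x i)\<^sup>2 = (y i)\<^sup>2" using yx by auto
    qed
    have "(\<Sum>j=lo..hi. bd j) \<le> (\<Sum>j=lo..hi. G j)" by (rule sum_mono) (rule lb)
    then show "\<eta>0/4 * (Nnorm J (\<lambda>j. x j / mesh Xmin Xmax J))\<^sup>2 - 3*C * normJ_sq J x
          \<le> innerJ J x (Atilde a b r Xmin Xmax J t x)"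
      unfolding tot Nn Ns bdsum by simp
    qed
  qed
qed

end
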